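(* Let $(X,G)$ be topologically transitive and $\lambda$ a $G$-invariant Borel probability measure on $X$. There is an at most countable family $\mathcal N_c\subseteq\mathcal N$ such that $\bigcap_{N\in\mathcal N}K_t(N)=\bigcap_{N\in\mathcal N_c}K_t(N)$, and consequently $\bigcap_{N\in\mathcal N}K_0(N)=\bigcap_{N\in\mathcal N_c}K_0(N)$ for every $G$-invariant $X_0\subseteq X_t$ with $\lambda(X_0)=1$.
   Context: $G$ is a group acting by homeomorphisms on a compact metrizable space $X$; $X_t:=\{x\in X:\overline{Gx}=X\}$. $\mathcal N$ is the family of all closed $G$-invariant (for the diagonal action) subsets of $X^2$; for $N\in\mathcal N$, $N_x:=\{y:(x,y)\in N\}$, $d_N(x,x'):=\lambda(N_x\triangle N_{x'})$, $K_t(N):=\{(x,x')\in X_t^2:d_N(x,x')=0\}$ and $K_0(N):=K_t(N)\cap X_0^2$. *)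

theory Defs
  imports "HOL-Probability.Probability" "HOL-Algebra.Group"
begin

text \<open>The compact metrizable space X is the whole type 'a (class metric_space, with
  compact UNIV). The group G is a HOL-Algebra group; phi g is the homeomorphism
  by which g acts.\<close>

definition action_by_homeos :: "('g, 'b) monoid_scheme \<Rightarrow> ('g \<Rightarrow> 'a::topological_space \<Rightarrow> 'a) \<Rightarrow> bool" where
  "action_by_homeos G phi \<longleftrightarrow>
     group G \<and>
     (\<forall>g\<in>carrier G. homeomorphism UNIV UNIV (phi g) (phi (inv\<^bsub>G\<^esub> g))) \<and>
     phi \<one>\<^bsub>G\<^esub> = id \<and>
     (\<forall>g\<in>carrier G. \<forall>h\<in>carrier G. phi (g \<otimes>\<^bsub>G\<^esub> h) = phi g \<circ> phi h)"

definition top_transitive :: "('g, 'b) monoid_scheme \<Rightarrow> ('g \<Rightarrow> 'a::topological_space \<Rightarrow> 'a) \<Rightarrow> bool" where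
  "top_transitive G phi \<longleftrightarrow>
     (\<forall>U V. open U \<and> open V \<and> U \<noteq> {} \<and> V \<noteq> {} \<longrightarrow>
        (\<exists>g\<in>carrier G. phi g ` U \<inter> V \<noteq> {}))"

definition orbit :: "('g, 'b) monoid_scheme \<Rightarrow> ('g \<Rightarrow> 'a \<Rightarrow> 'a) \<Rightarrow> 'a \<Rightarrow> 'a set" where
  "orbit G phi x = (\<lambda>g. phi g x) ` carrier G"

definition Xt :: "('g, 'b) monoid_scheme \<Rightarrow> ('g \<Rightarrow> 'a::topological_space \<Rightarrow> 'a) \<Rightarrow> 'a set" where
  "Xt G phi = {x. closure (orbit G phi x) = UNIV}"

definition invariant_set :: "('g, 'b) monoid_scheme \<Rightarrow> ('g \<Rightarrow> 'a \<Rightarrow> 'a) \<Rightarrow> 'a set \<Rightarrow> bool" where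
  "invariant_set G phi A \<longleftrightarrow> (\<forall>g\<in>carrier G. \<forall>x\<in>A. phi g x \<in> A)"

definition NN :: "('g, 'b) monoid_scheme \<Rightarrow> ('g \<Rightarrow> 'a::topological_space \<Rightarrow> 'a) \<Rightarrow> ('a \<times> 'a) set set" where
  "NN G phi = {N. closed N \<and> (\<forall>g\<in>carrier G. \<forall>x y. (x, y) \<in> N \<longrightarrow> (phi g x, phi g y) \<in> N)}"

definition fibre :: "('a \<times> 'a) set \<Rightarrow> 'a \<Rightarrow> 'a set" where
  "fibre N x = {y. (x, y) \<in> N}"

definition dN :: "'a measure \<Rightarrow> ('a \<times> 'a) set \<Rightarrow> 'a \<Rightarrow> 'a \<Rightarrow> real" where
  "dN lam N x x' = measure lam (sym_diff (fibre N x) (fibre N x'))"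

definition Kt :: "('g, 'b) monoid_scheme \<Rightarrow> ('g \<Rightarrow> 'a::topological_space \<Rightarrow> 'a) \<Rightarrow> 'a measure
    \<Rightarrow> ('a \<times> 'a) set \<Rightarrow> ('a \<times> 'a) set" where
  "Kt G phi lam N = {(x, x'). x \<in> Xt G phi \<and> x' \<in> Xt G phi \<and> dN lam N x x' = 0}"

definition K0 :: "('g, 'b) monoid_scheme \<Rightarrow> ('g \<Rightarrow> 'a::topological_space \<Rightarrow> 'a) \<Rightarrow> 'a measure
    \<Rightarrow> 'a set \<Rightarrow> ('a \<times> 'a) set \<Rightarrow> ('a \<times> 'a) set" where
  "K0 G phi lam X0 N = Kt G phi lam N \<inter> (X0 \<times> X0)"

end

theory Submission
  imports Defs
begin

lemma fibre_closed: "closed (N::('a::metric_space \<times> 'a) set) \<Longrightarrow> closed (fibre N x)"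
proof -
  assume "closed N"
  have "fibre N x = (\<lambda>y. (x, y)) -` N" by (auto simp: fibre_def)
  moreover have "closed ((\<lambda>y. (x, y)) -` N)"
    by (rule continuous_closed_vimage[OF \<open>closed N\<close>]) (auto intro!: continuous_intros)
  ultimately show ?thesis by simp
qed

lemma countable_base_compact:
  assumes cpt: "compact (UNIV :: 'a::metric_space set)"
  shows "\<exists>B::'a set set. countable B \<and> (\<forall>b\<in>B. open b) \<and>
           (\<forall>U x. open U \<longrightarrow> x \<in> U \<longrightarrow> (\<exists>b\<in>B. x \<in> b \<and> b \<subseteq> U))"
proof -
  have "\<forall>n::nat. \<exists>K::'a set. finite K \<and> UNIV \<subseteq> (\<Union>c\<in>K. ball c (1 / Suc n))"
  proof
    fix n :: nat
    have cov: "(UNIV::'a set) \<subseteq> (\<Union>c\<in>(UNIV::'a set). ball c (1 / Suc n))"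
      by (auto intro!: exI[of _ "1/Suc n"])
    obtain K :: "'a set" where "K \<subseteq> UNIV" "finite K" "UNIV \<subseteq> (\<Union>c\<in>K. ball c (1 / Suc n))"
      by (rule compactE_image[OF cpt _ cov]) auto
    then show "\<exists>K::'a set. finite K \<and> UNIV \<subseteq> (\<Union>c\<in>K. ball c (1 / Suc n))" by blast
  qed
  then obtain K :: "nat \<Rightarrow> 'a set" where K: "\<And>n. finite (K n)" "\<And>n. UNIV \<subseteq> (\<Union>c\<in>K n. ball c (1 / Suc n))"
    by metis
  define B where "B = (\<Union>n. (\<lambda>c. ball c (1 / Suc n)) ` K n)"
  have "countable B" unfolding B_def using K(1)
    by (intro countable_UN) (auto intro: countable_finite)
  moreover have "\<forall>b\<in>B. open b" by (auto simp: B_def)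
  moreover have "\<forall>U x. open U \<longrightarrow> x \<in> U \<longrightarrow> (\<exists>b\<in>B. x \<in> b \<and> b \<subseteq> U)"
  proof (intro allI impI)
    fix U x assume "open U" "x \<in> (U::'a set)"
    then obtain r where r: "r > 0" "ball x r \<subseteq> U" by (meson open_contains_ball)
    obtain n :: nat where n: "1 / Suc n < r / 2"
    proof -
      obtain n :: nat where "inverse (Suc n) < r / 2" using r(1) reals_Archimedean half_gt_zero by blast
      then show ?thesis using that by (simp add: field_simps)
    qed
    obtain c where c: "c \<in> K n" "x \<in> ball c (1 / Suc n)" using K(2)[of n] by blast
    have "ball c (1 / Suc n) \<subseteq> ball x r"
    proof
      fix y assume "y \<in> ball c (1 / Suc n)"
      then have "dist x y \<le> dist c x + dist c y" by (metis dist_commute dist_triangle)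
      also have "\<dots> < r" using c(2) \<open>y \<in> _\<close> n by (simp add: dist_commute)
      finally show "y \<in> ball x r" by simp
    qed
    then show "\<exists>b\<in>B. x \<in> b \<and> b \<subseteq> U" using c r unfolding B_def by blast
  qed
  ultimately show ?thesis by blast
qed

context
  fixes G :: "('g, 'b) monoid_scheme"
    and phi :: "'g \<Rightarrow> 'a::metric_space \<Rightarrow> 'a"
    and lam :: "'a measure"
  assumes cpt: "compact (UNIV :: 'a set)"
    and act: "action_by_homeos G phi"
    and ps: "prob_space lam"
    and sl: "sets lam = sets borel"
    and minv: "\<forall>g\<in>carrier G. \<forall>A\<in>sets lam. measure lam (phi g -` A) = measure lam A"
begin

interpretation prob_space lam by (rule ps)

lemma closed_sets: "closed (C::'a set) \<Longrightarrow> C \<in> sets lam"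
  using sl by (simp add: borel_closed)

lemma open_sets: "open (C::'a set) \<Longrightarrow> C \<in> sets lam"
  using sl by (simp add: borel_open)

lemma fib_sets: "closed (N::('a\<times>'a) set) \<Longrightarrow> fibre N x \<in> sets lam"
  by (simp add: closed_sets fibre_closed)

lemma outer:
  fixes C :: "'a set"
  assumes "closed C" "e > 0"
  shows "\<exists>V. open V \<and> C \<subseteq> V \<and> measure lam V < measure lam C + e"
proof -
  define V where "V n = (\<Union>c\<in>C. ball c (1 / Suc n))" for n :: nat
  have oV: "open (V n)" for n by (auto simp: V_def)
  have "decseq V"
  proof (rule decseq_SucI)
    fix n
    have "1 / real (Suc (Suc n)) \<le> 1 / Suc n" by (simp add: frac_le)
    then show "V (Suc n) \<subseteq> V n" unfolding V_def by fastforce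
  qed
  moreover have "range V \<subseteq> sets lam" using oV open_sets by auto
  ultimately have lim: "(\<lambda>n. measure lam (V n)) \<longlonglongrightarrow> measure lam (\<Inter>i. V i)"
    by (rule finite_Lim_measure_decseq[rotated])
  have "(\<Inter>i. V i) = C"
  proof
    show "C \<subseteq> (\<Inter>i. V i)" by (auto simp: V_def)
    show "(\<Inter>i. V i) \<subseteq> C"
    proof
      fix y assume y: "y \<in> (\<Inter>i. V i)"
      have "\<forall>\<epsilon>>0. \<exists>c\<in>C. dist c y < \<epsilon>"
      proof (intro allI impI)
        fix \<epsilon> :: real assume "\<epsilon> > 0"
        then obtain n :: nat where n: "1 / real (Suc n) < \<epsilon>"
          using reals_Archimedean by (auto simp: inverse_eq_divide)
        from y have "y \<in> V n" by blast
        then obtain c where "c \<in> C" "dist c y < 1 / Suc n" by (auto simp: V_def)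
        with n show "\<exists>c\<in>C. dist c y < \<epsilon>" by (meson order.strict_trans)
      qed
      then show "y \<in> C" using closed_approachable[OF assms(1)] by blast
    qed
  qed
  with lim have "(\<lambda>n. measure lam (V n)) \<longlonglongrightarrow> measure lam C" by simp
  then have "eventually (\<lambda>n. measure lam (V n) < measure lam C + e) sequentially"
    using assms(2) by (intro order_tendstoD(2)) auto
  then obtain n where "measure lam (V n) < measure lam C + e"
    by (auto simp: eventually_sequentially)
  moreover have "C \<subseteq> V n"
  proof
    fix c assume "c \<in> C" then show "c \<in> V n" by (auto simp: V_def intro!: bexI[of _ c])
  qed
  ultimately show ?thesis using oV by blast
qed

lemma tube:
  fixes N :: "('a \<times> 'a) set" and x :: 'a
  assumes "closed N" "open V" "fibre N x \<subseteq> V"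
  shows "\<exists>U. open U \<and> x \<in> U \<and> (\<forall>y\<in>U. fibre N y \<subseteq> V)"
proof -
  define K where "K = N \<inter> (UNIV \<times> (- V))"
  have "closed K" unfolding K_def using assms by (intro closed_Int closed_Times) auto
  moreover have "compact (UNIV :: ('a \<times> 'a) set)"
    using compact_Times[OF cpt cpt] by simp
  ultimately have "compact K" using closed_Int_compact[of K UNIV] by simp
  then have "compact (fst ` K)"
    by (intro compact_continuous_image) (auto intro: continuous_intros)
  then have "closed (fst ` K)" by (rule compact_imp_closed)
  moreover have "x \<notin> fst ` K" using assms(3) by (force simp: K_def fibre_def)
  moreover have "\<forall>y\<in>- fst ` K. fibre N y \<subseteq> V"
    by (force simp: K_def fibre_def)
  ultimately show ?thesis by (intro exI[of _ "- fst ` K"]) auto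
qed

lemma usc:
  fixes N :: "('a \<times> 'a) set" and x :: 'a
  assumes "closed N" "e > 0"
  shows "\<exists>U. open U \<and> x \<in> U \<and> (\<forall>y\<in>U. measure lam (fibre N y - fibre N x) < e
             \<and> measure lam (fibre N y) < measure lam (fibre N x) + e)"
proof -
  obtain V where V: "open V" "fibre N x \<subseteq> V" "measure lam V < measure lam (fibre N x) + e"
    using outer[OF fibre_closed[OF assms(1)] assms(2)] by blast
  obtain U where U: "open U" "x \<in> U" "\<forall>y\<in>U. fibre N y \<subseteq> V"
    using tube[OF assms(1) V(1,2)] by blast
  have mV: "measure lam (V - fibre N x) < e"
    using finite_measure_Diff[OF open_sets[OF V(1)] fib_sets[OF assms(1)] V(2)] V(3) by simp
  show ?thesis
  proof (intro exI[of _ U] conjI ballI U(1,2))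
    fix y assume "y \<in> U"
    then have sub: "fibre N y \<subseteq> V" using U(3) by blast
    have "measure lam (fibre N y - fibre N x) \<le> measure lam (V - fibre N x)"
      using sub by (intro finite_measure_mono) (auto intro: open_sets[OF V(1)] fib_sets[OF assms(1)])
    then show "measure lam (fibre N y - fibre N x) < e" using mV by simp
    have "measure lam (fibre N y) \<le> measure lam V"
      using sub by (intro finite_measure_mono open_sets[OF V(1)])
    then show "measure lam (fibre N y) < measure lam (fibre N x) + e" using V(3) by simp
  qed
qed

lemma grp: "group G" using act by (simp add: action_by_homeos_def)

lemma homeo: "g \<in> carrier G \<Longrightarrow> homeomorphism UNIV UNIV (phi g) (phi (inv\<^bsub>G\<^esub> g))"
  using act by (simp add: action_by_homeos_def)

lemma transl:
  fixes x :: 'a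
  assumes N: "N \<in> NN G phi" and g: "g \<in> carrier G"
  shows "measure lam (fibre N (phi g x)) = measure lam (fibre N x)"
proof -
  have gi: "inv\<^bsub>G\<^esub> g \<in> carrier G" using group.inv_closed[OF grp g] .
  have h: "\<And>y. phi (inv\<^bsub>G\<^esub> g) (phi g y) = y" "\<And>y. phi g (phi (inv\<^bsub>G\<^esub> g) y) = y"
    using homeo[OF g] by (auto simp: homeomorphism_def)
  have inv1: "\<And>a b. (a, b) \<in> N \<Longrightarrow> (phi g a, phi g b) \<in> N"
    and inv2: "\<And>a b. (a, b) \<in> N \<Longrightarrow> (phi (inv\<^bsub>G\<^esub> g) a, phi (inv\<^bsub>G\<^esub> g) b) \<in> N"
    using N g gi by (auto simp: NN_def)
  have "fibre N (phi g x) = phi (inv\<^bsub>G\<^esub> g) -` fibre N x"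
  proof (intro equalityI subsetI)
    fix z assume "z \<in> fibre N (phi g x)"
    then have "(phi g x, z) \<in> N" by (simp add: fibre_def)
    from inv2[OF this] show "z \<in> phi (inv\<^bsub>G\<^esub> g) -` fibre N x" by (simp add: fibre_def h)
  next
    fix z assume "z \<in> phi (inv\<^bsub>G\<^esub> g) -` fibre N x"
    then have "(x, phi (inv\<^bsub>G\<^esub> g) z) \<in> N" by (simp add: fibre_def)
    from inv1[OF this] show "z \<in> fibre N (phi g x)" by (simp add: fibre_def h)
  qed
  moreover have "closed N" using N by (simp add: NN_def)
  ultimately show ?thesis using minv gi fib_sets by simp
qed

lemma const_le:
  assumes N: "N \<in> NN G phi" and x: "x \<in> Xt G phi"
  shows "measure lam (fibre N x) \<le> measure lam (fibre N y)"
proof (rule ccontr)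
  assume nle: "\<not> measure lam (fibre N x) \<le> measure lam (fibre N y)"
  define e where "e = measure lam (fibre N x) - measure lam (fibre N y)"
  have "e > 0" using nle by (simp add: e_def)
  have cN: "closed N" using N by (simp add: NN_def)
  obtain U where U: "open U" "y \<in> U"
    "\<forall>z\<in>U. measure lam (fibre N z) < measure lam (fibre N y) + e"
    using usc[OF cN \<open>e > 0\<close>, of y] by blast
  have "U \<inter> closure (orbit G phi x) \<noteq> {}" using x U(2) by (auto simp: Xt_def)
  then have "U \<inter> orbit G phi x \<noteq> {}" using open_Int_closure_eq_empty[OF U(1)] by blast
  then obtain g where g: "g \<in> carrier G" "phi g x \<in> U" by (auto simp: orbit_def)
  have "measure lam (fibre N x) < measure lam (fibre N y) + e"
    using U(3) g(2) transl[OF N g(1)] by metis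
  then show False by (simp add: e_def)
qed

lemma dN_nonneg: "dN lam (N::('a\<times>'a) set) x y \<ge> 0" by (simp add: dN_def)

lemma dN_sym: "dN lam (N::('a\<times>'a) set) x y = dN lam N y x"
  by (simp add: dN_def Un_commute)

lemma dN_tri:
  fixes N :: "('a \<times> 'a) set"
  assumes "closed N"
  shows "dN lam N x z \<le> dN lam N x y + dN lam N y z"
proof -
  let ?A = "fibre N x" and ?B = "fibre N y" and ?C = "fibre N z"
  have "measure lam (sym_diff ?A ?C) \<le> measure lam (sym_diff ?A ?B \<union> sym_diff ?B ?C)"
    by (intro finite_measure_mono) (auto intro!: sets.Un sets.Diff fib_sets assms)
  also have "\<dots> \<le> measure lam (sym_diff ?A ?B) + measure lam (sym_diff ?B ?C)"
    by (intro measure_Un_le) (auto intro!: sets.Un sets.Diff fib_sets assms)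
  finally show ?thesis by (simp add: dN_def)
qed

lemma cont:
  assumes N: "N \<in> NN G phi" and x: "x \<in> Xt G phi" and e: "e > 0"
  shows "\<exists>U. open U \<and> x \<in> U \<and> (\<forall>y\<in>U \<inter> Xt G phi. dN lam N y x < e)"
proof -
  have cN: "closed N" using N by (simp add: NN_def)
  obtain U where U: "open U" "x \<in> U" "\<forall>y\<in>U. measure lam (fibre N y - fibre N x) < e/2"
    using usc[OF cN, of "e/2" x] e by auto
  show ?thesis
  proof (intro exI[of _ U] conjI ballI U(1,2))
    fix y assume y: "y \<in> U \<inter> Xt G phi"
    let ?A = "fibre N y" and ?B = "fibre N x"
    have sA: "?A \<in> sets lam" and sB: "?B \<in> sets lam" using fib_sets[OF cN] by auto
    have eq: "measure lam ?A = measure lam ?B"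
      using const_le[OF N x, of y] const_le[OF N, of y x] y by force
    have d1: "measure lam (?A - ?B) < e/2" using U(3) y by blast
    have "measure lam (?B - ?A) = measure lam ?B - measure lam (?B \<inter> ?A)"
      by (rule finite_measure_Diff'[OF sB sA])
    also have "\<dots> = measure lam ?A - measure lam (?A \<inter> ?B)" using eq by (simp add: Int_commute)
    also have "\<dots> = measure lam (?A - ?B)" by (rule finite_measure_Diff'[OF sA sB, symmetric])
    finally have d2: "measure lam (?B - ?A) < e/2" using d1 by simp
    have "measure lam (sym_diff ?A ?B) \<le> measure lam (?A - ?B) + measure lam (?B - ?A)"
      by (intro measure_Un_le) (auto intro!: sets.Diff sA sB)
    then show "dN lam N y x < e" using d1 d2 by (simp add: dN_def)
  qed
qed

lemma sep:
  assumes N: "N \<in> NN G phi" and x: "x \<in> Xt G phi" and x': "x' \<in> Xt G phi"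
    and pos: "dN lam N x x' > 0"
  shows "\<exists>U U'. open U \<and> open U' \<and> x \<in> U \<and> x' \<in> U' \<and>
           (\<forall>y\<in>U \<inter> Xt G phi. \<forall>y'\<in>U' \<inter> Xt G phi. dN lam N y y' > 0)"
proof -
  define d where "d = dN lam N x x'"
  have cN: "closed N" using N by (simp add: NN_def)
  obtain U where U: "open U" "x \<in> U" "\<forall>y\<in>U \<inter> Xt G phi. dN lam N y x < d/3"
    using cont[OF N x, of "d/3"] pos by (auto simp: d_def)
  obtain U' where U': "open U'" "x' \<in> U'" "\<forall>y\<in>U' \<inter> Xt G phi. dN lam N y x' < d/3"
    using cont[OF N x', of "d/3"] pos by (auto simp: d_def)
  have "\<forall>y\<in>U \<inter> Xt G phi. \<forall>y'\<in>U' \<inter> Xt G phi. dN lam N y y' > 0"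
  proof (intro ballI)
    fix y y' assume y: "y \<in> U \<inter> Xt G phi" and y': "y' \<in> U' \<inter> Xt G phi"
    have t1: "d \<le> dN lam N x y + dN lam N y x'" unfolding d_def by (rule dN_tri[OF cN])
    have t2: "dN lam N y x' \<le> dN lam N y y' + dN lam N y' x'" by (rule dN_tri[OF cN])
    have t3: "dN lam N x y < d/3" using U(3) y dN_sym by metis
    have t4: "dN lam N y' x' < d/3" using U'(3) y' by blast
    have t5: "d > 0" using pos by (simp add: d_def)
    from t1 t2 t3 t4 t5 show "dN lam N y y' > 0" by linarith
  qed
  then show ?thesis using U(1,2) U'(1,2) by blast
qed

end

theorem mainTheorem10:
  fixes G :: "('g, 'b) monoid_scheme"
    and phi :: "'g \<Rightarrow> 'a::metric_space \<Rightarrow> 'a"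
    and lam :: "'a measure"
  assumes "compact (UNIV :: 'a set)"
    and "action_by_homeos G phi"
    and "top_transitive G phi"
    and "prob_space lam"
    and "sets lam = sets borel"
    and "\<forall>g\<in>carrier G. \<forall>A\<in>sets lam. measure lam (phi g -` A) = measure lam A"
  shows "\<exists>Nc. countable Nc \<and> Nc \<subseteq> NN G phi \<and>
           (\<Inter>N\<in>NN G phi. Kt G phi lam N) = (\<Inter>N\<in>Nc. Kt G phi lam N) \<and>
           (\<forall>X0. X0 \<subseteq> Xt G phi \<and> invariant_set G phi X0 \<and> X0 \<in> sets lam \<and> measure lam X0 = 1
              \<longrightarrow> (\<Inter>N\<in>NN G phi. K0 G phi lam X0 N) = (\<Inter>N\<in>Nc. K0 G phi lam X0 N))"
proof -
  obtain B :: "'a set set" where B: "countable B" "\<forall>b\<in>B. open b"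
    "\<forall>U x. open U \<longrightarrow> x \<in> U \<longrightarrow> (\<exists>b\<in>B. x \<in> b \<and> b \<subseteq> U)"
    using countable_base_compact[OF assms(1)] by blast
  define P where "P b b' N \<longleftrightarrow> N \<in> NN G phi \<and>
      (\<forall>y\<in>b \<inter> Xt G phi. \<forall>y'\<in>b' \<inter> Xt G phi. dN lam N y y' > 0)" for b b' N
  define S where "S = {p \<in> B \<times> B. \<exists>N. P (fst p) (snd p) N}"
  define ch where "ch p = (SOME N. P (fst p) (snd p) N)" for p
  define Nc where "Nc = insert UNIV (ch ` S)"
  have chP: "P (fst p) (snd p) (ch p)" if "p \<in> S" for p
    using that unfolding S_def ch_def by (auto intro: someI_ex)
  have UN: "UNIV \<in> NN G phi" by (simp add: NN_def)
  have cnt: "countable Nc" unfolding Nc_def S_def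
    using B(1) by (auto intro!: countable_image countable_subset[of _ "B \<times> B"])
  have sub: "Nc \<subseteq> NN G phi" unfolding Nc_def using UN chP by (auto simp: P_def)
  have KU: "Kt G phi lam UNIV = Xt G phi \<times> Xt G phi"
    by (auto simp: Kt_def dN_def fibre_def)
  have eqK: "(\<Inter>N\<in>NN G phi. Kt G phi lam N) = (\<Inter>N\<in>Nc. Kt G phi lam N)"
  proof
    show "(\<Inter>N\<in>NN G phi. Kt G phi lam N) \<subseteq> (\<Inter>N\<in>Nc. Kt G phi lam N)" using sub by blast
    show "(\<Inter>N\<in>Nc. Kt G phi lam N) \<subseteq> (\<Inter>N\<in>NN G phi. Kt G phi lam N)"
    proof
      fix p assume p: "p \<in> (\<Inter>N\<in>Nc. Kt G phi lam N)"
      obtain x x' where pxx: "p = (x, x')" by fastforce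
      have "p \<in> Kt G phi lam UNIV" using p by (auto simp: Nc_def)
      then have x: "x \<in> Xt G phi" and x': "x' \<in> Xt G phi" using KU pxx by auto
      show "p \<in> (\<Inter>N\<in>NN G phi. Kt G phi lam N)"
      proof
        fix N assume N: "N \<in> NN G phi"
        show "p \<in> Kt G phi lam N"
        proof (rule ccontr)
          assume "p \<notin> Kt G phi lam N"
          then have "dN lam N x x' \<noteq> 0" using x x' pxx by (auto simp: Kt_def)
          moreover have "dN lam N x x' \<ge> 0" by (simp add: dN_def)
          ultimately have "dN lam N x x' > 0" by linarith
          then obtain U U' where UU: "open U" "open U'" "x \<in> U" "x' \<in> U'"
            "\<forall>y\<in>U \<inter> Xt G phi. \<forall>y'\<in>U' \<inter> Xt G phi. dN lam N y y' > 0"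
            using sep[OF assms(1,2,4,5,6) N x x'] by blast
          obtain b where b: "b \<in> B" "x \<in> b" "b \<subseteq> U" using B(3) UU(1,3) by blast
          obtain b' where b': "b' \<in> B" "x' \<in> b'" "b' \<subseteq> U'" using B(3) UU(2,4) by blast
          have "P b b' N" unfolding P_def using N UU(5) b(3) b'(3) by blast
          then have bS: "(b, b') \<in> S" unfolding S_def using b b' by auto
          then have "P b b' (ch (b, b'))" using chP by fastforce
          then have "dN lam (ch (b, b')) x x' > 0" using x x' b b' by (auto simp: P_def)
          moreover have "p \<in> Kt G phi lam (ch (b, b'))" using p bS by (auto simp: Nc_def)
          ultimately show False using pxx by (auto simp: Kt_def)
        qed
      qed
    qed
  qed
  have K0eq: "\<forall>X0. (\<Inter>N\<in>NN G phi. K0 G phi lam X0 N) = (\<Inter>N\<in>Nc. K0 G phi lam X0 N)"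
  proof
    fix X0
    have "(\<Inter>N\<in>NN G phi. K0 G phi lam X0 N) = (\<Inter>N\<in>NN G phi. Kt G phi lam N) \<inter> (X0 \<times> X0)"
      using UN by (auto simp: K0_def)
    also have "\<dots> = (\<Inter>N\<in>Nc. Kt G phi lam N) \<inter> (X0 \<times> X0)" using eqK by simp
    also have "\<dots> = (\<Inter>N\<in>Nc. K0 G phi lam X0 N)" by (auto simp: K0_def Nc_def)
    finally show "(\<Inter>N\<in>NN G phi. K0 G phi lam X0 N) = (\<Inter>N\<in>Nc. K0 G phi lam X0 N)" .
  qed
  show ?thesis
    by (rule exI[of _ Nc]) (simp only: cnt sub eqK K0eq simp_thms)
qed

end
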